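(* Let $K$ be an $\mathcal R$-dioid, $m\ge2$, and let $\phi=SA^*F\in K\otimes_{\mathcal R}C_m'$, where for some $n$, $S\in\{0,1\}^{1\times n}$, $F\in\{0,1\}^{n\times 1}$ and $A=U+X+V$ with $U\in\{0,p_1,\ldots,p_{m-1}\}^{n\times n}$, $X\in K^{n\times n}$, $V\in\{0,q_1,\ldots,q_{m-1}\}^{n\times n}$ (so $p_0,q_0$ are not used). Let $S(NV)^*N(UN)^*F$ be the normal form of $\phi$, i.e. $N$ is the least solution of $y\ge(UyV+X)^*$ in $\mathrm{Mat}_{n\times n}(K\otimes_{\mathcal R}C_m')$, $N\in(Z_{C_m'}K)^{n\times n}$, and $A^*=(NV)^*N(UN)^*$. Then \[ p_0\,\phi\,q_0=SNF\in Z_{C_m'}K. \]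
   Context: An $\mathcal R$-dioid is a dioid in which every regular subset of its multiplicative monoid has a supremum $\sum A$ with $\sum(AB)=(\sum A)(\sum B)$ (equivalently a $*$-continuous Kleene algebra). An $\mathcal R$-congruence is a semiring congruence such that regular sets with equal downward closures modulo it have congruent suprema. $\Delta_m=\{p_0,\dots,p_{m-1},q_0,\dots,q_{m-1}\}$; $C_m'=\mathcal R\Delta_m^*/\rho$ where $\mathcal R\Delta_m^*$ is the algebra of regular languages over $\Delta_m$ and $\rho$ the least $\mathcal R$-congruence containing $p_iq_j=\delta_{i,j}$ ($i,j<m$). $K\otimes_{\mathcal R}C_m'$ is the tensor product of $\mathcal R$-dioids (universal $\mathcal R$-dioid with $\mathcal R$-morphisms from $K$ and $C_m'$ whose images commute elementwise); elements of $K,C_m'$ are identified with their images. $Z_{C_m'}K$ is the set of elements commuting with all of $C_m'$. Matrices carry the standard matrix Kleene algebra structure; brackets multiplied with matrices are identified with diagonal matrices. *)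

theory Defs
  imports Main
begin

class dioid = semiring_0 + monoid_mult +
  assumes add_idem: "a + a = a"

definition dle :: "'a::dioid \<Rightarrow> 'a \<Rightarrow> bool" where
  "dle a b \<longleftrightarrow> a + b = b"

definition is_lub :: "'a::dioid \<Rightarrow> 'a set \<Rightarrow> bool" where
  "is_lub s A \<longleftrightarrow> (\<forall>a\<in>A. dle a s) \<and> (\<forall>u. (\<forall>a\<in>A. dle a u) \<longrightarrow> dle s u)"

definition rsup :: "'a::dioid set \<Rightarrow> 'a" where
  "rsup A = (THE s. is_lub s A)"

definition setmult :: "'a::monoid_mult set \<Rightarrow> 'a set \<Rightarrow> 'a set" where
  "setmult A B = {a * b | a b. a \<in> A \<and> b \<in> B}"

fun setpow :: "'a::monoid_mult set \<Rightarrow> nat \<Rightarrow> 'a set" where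
  "setpow A 0 = {1}"
| "setpow A (Suc n) = setmult A (setpow A n)"

definition setstar :: "'a::monoid_mult set \<Rightarrow> 'a set" where
  "setstar A = (\<Union>n. setpow A n)"

inductive rational :: "'a::monoid_mult set \<Rightarrow> bool" where
  rat_fin: "finite A \<Longrightarrow> rational A"
| rat_un: "rational A \<Longrightarrow> rational B \<Longrightarrow> rational (A \<union> B)"
| rat_mult: "rational A \<Longrightarrow> rational B \<Longrightarrow> rational (setmult A B)"
| rat_star: "rational A \<Longrightarrow> rational (setstar A)"

definition R_dioid :: "'a::dioid itself \<Rightarrow> bool" where
  "R_dioid _ \<longleftrightarrow> (\<forall>A::'a set. rational A \<longrightarrow> (\<exists>s. is_lub s A)) \<and>
     (\<forall>A B::'a set. rational A \<longrightarrow> rational B \<longrightarrow> rsup (setmult A B) = rsup A * rsup B)"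

definition R_morphism :: "('a::dioid \<Rightarrow> 'b::dioid) \<Rightarrow> bool" where
  "R_morphism f \<longleftrightarrow> f 0 = 0 \<and> f 1 = 1 \<and> (\<forall>a b. f (a + b) = f a + f b)
     \<and> (\<forall>a b. f (a * b) = f a * f b)
     \<and> (\<forall>A. rational A \<longrightarrow> f (rsup A) = rsup (f ` A))"

text \<open>Letters of the alphabet Delta_m: P i = p_i, Q i = q_i (i < m).\<close>
datatype gen = P nat | Q nat

definition Delta :: "nat \<Rightarrow> gen set" where
  "Delta m = {P i | i. i < m} \<union> {Q i | i. i < m}"

inductive reglang :: "gen list set \<Rightarrow> bool" where
  reg_fin: "finite L \<Longrightarrow> reglang L"
| reg_un: "reglang L1 \<Longrightarrow> reglang L2 \<Longrightarrow> reglang (L1 \<union> L2)"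
| reg_conc: "reglang L1 \<Longrightarrow> reglang L2 \<Longrightarrow> reglang {u @ v | u v. u \<in> L1 \<and> v \<in> L2}"
| reg_star: "reglang L \<Longrightarrow> reglang {concat ws | ws. set ws \<subseteq> L}"

fun letterval :: "(nat \<Rightarrow> 'a) \<Rightarrow> (nat \<Rightarrow> 'a) \<Rightarrow> gen \<Rightarrow> 'a" where
  "letterval p q (P i) = p i"
| "letterval p q (Q i) = q i"

definition wordval :: "(nat \<Rightarrow> 'a::monoid_mult) \<Rightarrow> (nat \<Rightarrow> 'a) \<Rightarrow> gen list \<Rightarrow> 'a" where
  "wordval p q w = foldr (\<lambda>x y. letterval p q x * y) w 1"

text \<open>Image of C_m' = R Delta_m^* / rho under the R-morphism determined by
  p_i |-> p i, q_i |-> q i: the suprema of the word values of regular languages.\<close>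
definition Cimg :: "nat \<Rightarrow> (nat \<Rightarrow> 'a::dioid) \<Rightarrow> (nat \<Rightarrow> 'a) \<Rightarrow> 'a set" where
  "Cimg m p q = {rsup (wordval p q ` L) | L. reglang L \<and> L \<subseteq> lists (Delta m)}"

definition Cm_rel :: "nat \<Rightarrow> (nat \<Rightarrow> 'a::dioid) \<Rightarrow> (nat \<Rightarrow> 'a) \<Rightarrow> bool" where
  "Cm_rel m p q \<longleftrightarrow> (\<forall>i<m. \<forall>j<m. p i * q j = (if i = j then 1 else 0))"

text \<open>(iota, p, q) exhibits T = K tensor_R C_m': iota is the R-morphism K -> T,
  p, q are the images of the generators of C_m' (so the relations hold),
  images commute elementwise, and universality (for targets of the same
  carrier type).\<close>
definition tensor_Cm :: "nat \<Rightarrow> ('k::dioid \<Rightarrow> 't::dioid) \<Rightarrow> (nat \<Rightarrow> 't) \<Rightarrow> (nat \<Rightarrow> 't) \<Rightarrow> bool" where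
  "tensor_Cm m \<iota> p q \<longleftrightarrow>
     R_morphism \<iota> \<and> Cm_rel m p q \<and> (\<forall>k. \<forall>c\<in>Cimg m p q. \<iota> k * c = c * \<iota> k) \<and>
     (\<forall>(\<iota>'::'k \<Rightarrow> 't) p' q'. R_morphism \<iota>' \<and> Cm_rel m p' q' \<and>
         (\<forall>k. \<forall>c\<in>Cimg m p' q'. \<iota>' k * c = c * \<iota>' k) \<longrightarrow>
       (\<exists>!h. R_morphism h \<and> h \<circ> \<iota> = \<iota>' \<and> (\<forall>i<m. h (p i) = p' i \<and> h (q i) = q' i)))"

definition Zc :: "nat \<Rightarrow> (nat \<Rightarrow> 'a::dioid) \<Rightarrow> (nat \<Rightarrow> 'a) \<Rightarrow> 'a set" where
  "Zc m p q = {x. \<forall>c\<in>Cimg m p q. x * c = c * x}"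

section \<open>n x n matrices (entries with indices < n are relevant)\<close>

type_synonym 'a mat = "nat \<Rightarrow> nat \<Rightarrow> 'a"

definition mat_add :: "'a::dioid mat \<Rightarrow> 'a mat \<Rightarrow> 'a mat" where
  "mat_add A B = (\<lambda>i j. A i j + B i j)"

definition mat_mult :: "nat \<Rightarrow> 'a::dioid mat \<Rightarrow> 'a mat \<Rightarrow> 'a mat" where
  "mat_mult n A B = (\<lambda>i j. \<Sum>k<n. A i k * B k j)"

definition mat_one :: "'a::dioid mat" where
  "mat_one = (\<lambda>i j. if i = j then 1 else 0)"

fun mat_pow :: "nat \<Rightarrow> 'a::dioid mat \<Rightarrow> nat \<Rightarrow> 'a mat" where
  "mat_pow n A 0 = mat_one"
| "mat_pow n A (Suc k) = mat_mult n A (mat_pow n A k)"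

definition mat_star :: "nat \<Rightarrow> 'a::dioid mat \<Rightarrow> 'a mat" where
  "mat_star n A = (\<lambda>i j. rsup {mat_pow n A k i j | k. True})"

definition mat_le :: "nat \<Rightarrow> 'a::dioid mat \<Rightarrow> 'a mat \<Rightarrow> bool" where
  "mat_le n A B \<longleftrightarrow> (\<forall>i<n. \<forall>j<n. dle (A i j) (B i j))"

definition mat_eq :: "nat \<Rightarrow> 'a mat \<Rightarrow> 'a mat \<Rightarrow> bool" where
  "mat_eq n A B \<longleftrightarrow> (\<forall>i<n. \<forall>j<n. A i j = B i j)"

definition row_mat_col :: "nat \<Rightarrow> (nat \<Rightarrow> 'a::dioid) \<Rightarrow> 'a mat \<Rightarrow> (nat \<Rightarrow> 'a) \<Rightarrow> 'a" where
  "row_mat_col n S M F = (\<Sum>i<n. \<Sum>j<n. S i * M i j * F j)"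

definition least_sol :: "nat \<Rightarrow> 'a::dioid mat \<Rightarrow> 'a mat \<Rightarrow> 'a mat \<Rightarrow> 'a mat \<Rightarrow> bool" where
  "least_sol n U V X N \<longleftrightarrow>
     mat_le n (mat_star n (mat_add (mat_mult n (mat_mult n U N) V) X)) N \<and>
     (\<forall>Y. mat_le n (mat_star n (mat_add (mat_mult n (mat_mult n U Y) V) X)) Y \<longrightarrow> mat_le n N Y)"

end

theory Submission
  imports Defs
begin

lemma dle_refl: "dle (a::'a::dioid) a" by (simp add: dle_def add_idem)
lemma dle_trans [trans]: "dle (a::'a::dioid) b \<Longrightarrow> dle b c \<Longrightarrow> dle a c"
  unfolding dle_def by (metis add.assoc)
lemma dle_antisym: "dle (a::'a::dioid) b \<Longrightarrow> dle b a \<Longrightarrow> a = b"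
  unfolding dle_def by (metis add.commute)
lemma dle_zero: "dle 0 (a::'a::dioid)" by (simp add: dle_def)
lemma dle_add_iff: "dle ((a::'a::dioid) + b) c \<longleftrightarrow> dle a c \<and> dle b c"
  unfolding dle_def by (metis add.assoc add.commute add.left_commute add_idem)
lemma dle_addL: "dle (a::'a::dioid) (a + b)"
  unfolding dle_def by (metis add.assoc add_idem)
lemma dle_addR: "dle (b::'a::dioid) (a + b)"
  unfolding dle_def by (metis add.assoc add.commute add_idem)
lemma dle_mult_left: "dle (a::'a::dioid) b \<Longrightarrow> dle (c*a) (c*b)"
  unfolding dle_def by (metis distrib_left)
lemma dle_mult_right: "dle (a::'a::dioid) b \<Longrightarrow> dle (a*c) (b*c)"
  unfolding dle_def by (metis distrib_right)
lemma dle_add_mono: "dle (a::'a::dioid) b \<Longrightarrow> dle c d \<Longrightarrow> dle (a+c) (b+d)"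
  by (meson dle_add_iff dle_addL dle_addR dle_trans)
lemma dle_sum: "(\<And>i. i\<in>I \<Longrightarrow> dle (f i) (u::'a::dioid)) \<Longrightarrow> dle (sum f I) u"
proof (induction I rule: infinite_finite_induct)
  case (infinite A) then show ?case by (simp add: dle_zero)
next
  case empty then show ?case by (simp add: dle_zero)
next
  case (insert x F) then show ?case by (simp add: dle_add_iff)
qed
lemma dle_sum_mono: "(\<And>i. i\<in>I \<Longrightarrow> dle (f i) (g i::'a::dioid)) \<Longrightarrow> dle (sum f I) (sum g I)"
proof (induction I rule: infinite_finite_induct)
  case (infinite A) then show ?case by (simp add: dle_refl)
next
  case empty then show ?case by (simp add: dle_refl)
next
  case (insert x F) then show ?case by (simp add: dle_add_mono)
qed
lemma dle_in_sum: "finite I \<Longrightarrow> i \<in> I \<Longrightarrow> dle (f i) (sum f I::'a::dioid)"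
  by (metis dle_addL sum.remove)

lemma lub_unique: "is_lub s A \<Longrightarrow> rsup A = (s::'a::dioid)"
  unfolding rsup_def
  by (rule the_equality) (auto simp: is_lub_def intro: dle_antisym)

fun pw :: "'a::dioid mat \<Rightarrow> nat \<Rightarrow> nat list \<Rightarrow> nat \<Rightarrow> 'a" where
  "pw M i [] j = M i j"
| "pw M i (v#vs) j = M i v * pw M v vs j"

lemma pw_append: "pw M i (as @ r # bs) j = pw M i as r * pw M r bs j"
  by (induction as arbitrary: i) (simp_all add: mult.assoc)

definition Pset :: "'a::dioid mat \<Rightarrow> nat \<Rightarrow> nat \<Rightarrow> nat \<Rightarrow> 'a set" where
  "Pset M r i j = {pw M i vs j | vs. set vs \<subseteq> {..<r}}"

lemma Pset_0: "Pset M 0 i j = {M i j}"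
  unfolding Pset_def by auto

lemma star_one: "1 \<in> setstar A"
  unfolding setstar_def by (auto intro: exI[of _ 0])

lemma star_step: "a \<in> A \<Longrightarrow> x \<in> setstar A \<Longrightarrow> a * x \<in> setstar A"
proof -
  assume a: "a \<in> A" and x: "x \<in> setstar A"
  then obtain k where "x \<in> setpow A k" unfolding setstar_def by blast
  then have "a * x \<in> setpow A (Suc k)" using a by (auto simp: setmult_def)
  then show ?thesis unfolding setstar_def by blast
qed

lemma sub_lt: "set vs \<subseteq> {..<Suc r} \<Longrightarrow> r \<notin> set vs \<Longrightarrow> set vs \<subseteq> {..<r}"
  using less_Suc_eq by auto

lemma L1: "set bs \<subseteq> {..<Suc r} \<Longrightarrow>
  pw M r bs j \<in> setmult (setstar (Pset M r r r)) (Pset M r r j)"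
proof (induction "length bs" arbitrary: bs rule: less_induct)
  case less
  show ?case
  proof (cases "r \<in> set bs")
    case False
    then have "pw M r bs j \<in> Pset M r r j" using less.prems sub_lt
      unfolding Pset_def by blast
    then show ?thesis unfolding setmult_def using star_one by force
  next
    case True
    then obtain cs ds where bs: "bs = cs @ r # ds" and rc: "r \<notin> set cs"
      by (meson split_list_first)
    have "length ds < length bs" using bs by simp
    moreover have "set ds \<subseteq> {..<Suc r}" using less.prems bs by auto
    ultimately have "pw M r ds j \<in> setmult (setstar (Pset M r r r)) (Pset M r r j)"
      using less.hyps by blast
    then obtain x y where xy: "pw M r ds j = x * y" "x \<in> setstar (Pset M r r r)" "y \<in> Pset M r r j"
      unfolding setmult_def by blast
    have "set cs \<subseteq> {..<r}" using less.prems bs rc sub_lt by auto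
    then have c: "pw M r cs r \<in> Pset M r r r" 
      unfolding Pset_def by blast
    have "pw M r bs j = (pw M r cs r * x) * y" using bs xy by (simp add: pw_append mult.assoc)
    then show ?thesis unfolding setmult_def using star_step[OF c xy(2)] xy(3) by blast
  qed
qed

lemma L2: "x \<in> setpow (Pset M r r r) k \<Longrightarrow> y \<in> Pset M (Suc r) r j \<Longrightarrow> x * y \<in> Pset M (Suc r) r j"
proof (induction k arbitrary: x)
  case 0 then show ?case by simp
next
  case (Suc k)
  then obtain c x' where cx: "x = c * x'" "c \<in> Pset M r r r" "x' \<in> setpow (Pset M r r r) k"
    by (auto simp: setmult_def)
  then have "x' * y \<in> Pset M (Suc r) r j" using Suc by blast
  then obtain ds where ds: "x' * y = pw M r ds j" "set ds \<subseteq> {..<Suc r}" unfolding Pset_def by blast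
  obtain cs where cs: "c = pw M r cs r" "set cs \<subseteq> {..<r}" using cx unfolding Pset_def by blast
  have "x * y = pw M r (cs @ r # ds) j" using cx cs ds by (simp add: pw_append mult.assoc)
  moreover have "set (cs @ r # ds) \<subseteq> {..<Suc r}" using cs ds by auto
  ultimately show ?case unfolding Pset_def by blast
qed

lemma Pset_Suc: "Pset M (Suc r) i j = Pset M r i j \<union>
   setmult (Pset M r i r) (setmult (setstar (Pset M r r r)) (Pset M r r j))"
proof
  show "Pset M (Suc r) i j \<subseteq> Pset M r i j \<union>
   setmult (Pset M r i r) (setmult (setstar (Pset M r r r)) (Pset M r r j))"
  proof
    fix w assume "w \<in> Pset M (Suc r) i j"
    then obtain vs where vs: "w = pw M i vs j" "set vs \<subseteq> {..<Suc r}" unfolding Pset_def by blast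
    show "w \<in> Pset M r i j \<union>
       setmult (Pset M r i r) (setmult (setstar (Pset M r r r)) (Pset M r r j))"
    proof (cases "r \<in> set vs")
      case False
      then have "w \<in> Pset M r i j" using vs sub_lt unfolding Pset_def by blast
      then show ?thesis by blast
    next
      case True
      then obtain as bs where ab: "vs = as @ r # bs" and ra: "r \<notin> set as"
        by (meson split_list_first)
      have "set as \<subseteq> {..<r}" using vs ab ra sub_lt by auto
      then have "pw M i as r \<in> Pset M r i r" unfolding Pset_def by blast
      moreover have "pw M r bs j \<in> setmult (setstar (Pset M r r r)) (Pset M r r j)"
        using vs ab by (intro L1) auto
      ultimately show ?thesis using vs ab by (auto simp: pw_append setmult_def)
    qed
  qed
next
  have mono: "Pset M r a b \<subseteq> Pset M (Suc r) a b" for a b unfolding Pset_def by fastforce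
  show "Pset M r i j \<union>
   setmult (Pset M r i r) (setmult (setstar (Pset M r r r)) (Pset M r r j)) \<subseteq> Pset M (Suc r) i j"
  proof (rule Un_least[OF mono], rule subsetI)
    fix w assume "w \<in> setmult (Pset M r i r) (setmult (setstar (Pset M r r r)) (Pset M r r j))"
    then obtain a x y where w: "w = a * (x * y)" "a \<in> Pset M r i r" "x \<in> setstar (Pset M r r r)"
      "y \<in> Pset M r r j" unfolding setmult_def by blast
    obtain k where "x \<in> setpow (Pset M r r r) k" using w(3) unfolding setstar_def by blast
    then have "x * y \<in> Pset M (Suc r) r j" using L2 w(4) mono by blast
    then obtain ds where ds: "x * y = pw M r ds j" "set ds \<subseteq> {..<Suc r}" unfolding Pset_def by blast
    obtain as where as: "a = pw M i as r" "set as \<subseteq> {..<r}" using w unfolding Pset_def by blast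
    have "w = pw M i (as @ r # ds) j" using w ds as by (simp add: pw_append)
    moreover have "set (as @ r # ds) \<subseteq> {..<Suc r}" using as ds by auto
    ultimately show "w \<in> Pset M (Suc r) i j" unfolding Pset_def by blast
  qed
qed

lemma Pset_rational: "rational (Pset M r i j)"
proof (induction r arbitrary: i j)
  case 0 then show ?case by (simp add: Pset_0 rat_fin)
next
  case (Suc r) then show ?case by (simp add: Pset_Suc rat_un rat_mult rat_star)
qed

definition Wset :: "'a::dioid mat \<Rightarrow> nat \<Rightarrow> nat \<Rightarrow> nat \<Rightarrow> 'a set" where
  "Wset M n i j = Pset M n i j \<union> (if i = j then {1} else {})"

lemma Wset_rational: "rational (Wset M n i j)"
  unfolding Wset_def by (intro rat_un Pset_rational rat_fin) simp

lemma Wset_step: "w \<in> Wset M n l j \<Longrightarrow> l < n \<Longrightarrow> M i l * w \<in> Wset M n i j"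
proof -
  assume w: "w \<in> Wset M n l j" and l: "l < n"
  show ?thesis
  proof (cases "w \<in> Pset M n l j")
    case True
    then obtain vs where "w = pw M l vs j" "set vs \<subseteq> {..<n}" unfolding Pset_def by blast
    then have "M i l * w = pw M i (l # vs) j" "set (l#vs) \<subseteq> {..<n}" using l by auto
    then show ?thesis unfolding Wset_def Pset_def by blast
  next
    case False
    then have "w = 1" "l = j" using w unfolding Wset_def by (auto split: if_splits)
    then have "M i l * w = pw M i [] j" by simp
    then show ?thesis unfolding Wset_def Pset_def by fastforce
  qed
qed

lemma ub_a: "(\<forall>w \<in> Wset M n i j. dle (c*w) u) \<Longrightarrow> dle (c * mat_pow n M k i j) u"
proof (induction k arbitrary: i c)
  case 0
  then show ?case
    by (cases "i = j") (auto simp: mat_one_def Wset_def dle_zero)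
next
  case (Suc k)
  have "dle ((c * M i l) * mat_pow n M k l j) u" if l: "l < n" for l
  proof (rule Suc.IH, rule ballI)
    fix w assume "w \<in> Wset M n l j"
    then have "M i l * w \<in> Wset M n i j" using Wset_step l by blast
    then show "dle ((c * M i l) * w) u" using Suc.prems by (simp add: mult.assoc)
  qed
  then have "dle (\<Sum>l<n. c * (M i l * mat_pow n M k l j)) u"
    by (intro dle_sum) (simp add: mult.assoc)
  then show ?case by (simp add: mat_mult_def sum_distrib_left)
qed

lemma ub_b: "w \<in> Wset M n i j \<Longrightarrow> j < n \<Longrightarrow> \<exists>k. dle w (mat_pow n M k i j)"
proof -
  assume w: "w \<in> Wset M n i j" and j: "j < n"
  have "dle (pw M i vs j) (mat_pow n M (Suc (length vs)) i j)" if "set vs \<subseteq> {..<n}" for vs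
    using that
  proof (induction vs arbitrary: i)
    case Nil
    have "dle (M i j * mat_one j j) (\<Sum>l<n. M i l * mat_one l j)"
      using j by (intro dle_in_sum[where f = "\<lambda>l. M i l * mat_one l j"]) auto
    then show ?case by (simp add: mat_mult_def mat_one_def)
  next
    case (Cons v vs)
    then have v: "v < n" and "dle (pw M v vs j) (mat_pow n M (Suc (length vs)) v j)" by auto
    then have "dle (M i v * pw M v vs j) (M i v * mat_pow n M (Suc (length vs)) v j)"
      by (simp add: dle_mult_left)
    also have "dle (M i v * mat_pow n M (Suc (length vs)) v j)
       (\<Sum>l<n. M i l * mat_pow n M (Suc (length vs)) l j)"
      using v by (intro dle_in_sum[where f = "\<lambda>l. M i l * mat_pow n M (Suc (length vs)) l j"]) auto
    finally show ?case by (simp add: mat_mult_def)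
  qed
  then have P: "\<exists>k. dle (pw M i vs j) (mat_pow n M k i j)" if "set vs \<subseteq> {..<n}" for vs
    using that by blast
  show ?thesis
  proof (cases "w \<in> Pset M n i j")
    case True then show ?thesis using P unfolding Pset_def by blast
  next
    case False
    then have "w = 1" "i = j" using w unfolding Wset_def by (auto split: if_splits)
    then have "dle w (mat_pow n M 0 i j)" by (simp add: mat_one_def dle_refl)
    then show ?thesis by blast
  qed
qed

lemma star_lub:
  assumes R: "R_dioid TYPE('a::dioid)" and j: "j < n"
  shows "is_lub (mat_star n (M::'a mat) i j) {mat_pow n M k i j | k. True}"
proof -
  obtain s where s: "is_lub s (Wset M n i j)"
    using R Wset_rational unfolding R_dioid_def by blast
  have ub: "(\<forall>w\<in>Wset M n i j. dle w u) \<longleftrightarrow> (\<forall>t\<in>{mat_pow n M k i j | k. True}. dle t u)" for u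
  proof
    assume "\<forall>w\<in>Wset M n i j. dle w u"
    then show "\<forall>t\<in>{mat_pow n M k i j | k. True}. dle t u"
      using ub_a[of M n i j 1 u] by auto
  next
    assume a: "\<forall>t\<in>{mat_pow n M k i j | k. True}. dle t u"
    show "\<forall>w\<in>Wset M n i j. dle w u"
    proof
      fix w assume "w \<in> Wset M n i j"
      then obtain k where "dle w (mat_pow n M k i j)" using ub_b j by blast
      then show "dle w u" using a dle_trans by blast
    qed
  qed
  have "is_lub s {mat_pow n M k i j | k. True}"
    using s ub unfolding is_lub_def by blast
  then show ?thesis unfolding mat_star_def using lub_unique by metis
qed

lemma sum_one_r: "j < n \<Longrightarrow> (\<Sum>l<n. (M::'a::dioid mat) i l * mat_one l j) = M i j"
proof -
  assume j: "j < n"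
  have "(\<Sum>l<n. M i l * mat_one l j) = (\<Sum>l<n. if l = j then M i l else 0)"
    by (rule sum.cong) (auto simp: mat_one_def)
  also have "\<dots> = M i j" using j by (simp add: sum.delta')
  finally show ?thesis .
qed

lemma sum_one_l: "i < n \<Longrightarrow> (\<Sum>l<n. mat_one i l * (M::'a::dioid mat) l j) = M i j"
proof -
  assume i: "i < n"
  have "(\<Sum>l<n. mat_one i l * M l j) = (\<Sum>l<n. if i = l then M l j else 0)"
    by (rule sum.cong) (auto simp: mat_one_def)
  also have "\<dots> = M i j" using i by (simp add: sum.delta)
  finally show ?thesis .
qed

lemma mat_pow_Suc_right:
  "i < n \<Longrightarrow> j < n \<Longrightarrow> mat_pow n (M::'a::dioid mat) (Suc k) i j = (\<Sum>l<n. mat_pow n M k i l * M l j)"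
proof (induction k arbitrary: i)
  case 0
  then show ?case by (simp add: mat_mult_def sum_one_r sum_one_l)
next
  case (Suc k)
  have "mat_pow n M (Suc (Suc k)) i j = (\<Sum>l<n. M i l * mat_pow n M (Suc k) l j)"
    by (simp add: mat_mult_def)
  also have "\<dots> = (\<Sum>l<n. M i l * (\<Sum>a<n. mat_pow n M k l a * M a j))"
    using Suc by (intro sum.cong) auto
  also have "\<dots> = (\<Sum>a<n. (\<Sum>l<n. M i l * mat_pow n M k l a) * M a j)"
    by (simp add: sum_distrib_left sum_distrib_right mult.assoc) (rule sum.swap)
  also have "\<dots> = (\<Sum>a<n. mat_pow n M (Suc k) i a * M a j)"
    by (simp add: mat_mult_def)
  finally show ?case .
qed

lemma star_ge: "R_dioid TYPE('a::dioid) \<Longrightarrow> j < n \<Longrightarrow> dle (mat_pow n (M::'a mat) k i j) (mat_star n M i j)"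
  using star_lub[of j n M i] unfolding is_lub_def by blast

lemma star_le: "R_dioid TYPE('a::dioid) \<Longrightarrow> j < n \<Longrightarrow> (\<And>k. dle (mat_pow n (M::'a mat) k i j) u)
   \<Longrightarrow> dle (mat_star n M i j) u"
  using star_lub[of j n M i] unfolding is_lub_def by blast

lemma annihil_left:
  assumes R: "R_dioid TYPE('a::dioid)" and i: "i < n" and k: "k < n"
    and c: "\<And>l. l < n \<Longrightarrow> c * (M::'a mat) i l = 0"
  shows "c * mat_star n M i k = c * mat_one i k"
proof -
  define u where "u = mat_one i k + (\<Sum>l<n. M i l * mat_star n M l k)"
  have "dle (mat_pow n M kk i k) u" for kk
  proof (cases kk)
    case 0 then show ?thesis by (simp add: u_def dle_addL)
  next
    case (Suc kk')
    have "dle (\<Sum>l<n. M i l * mat_pow n M kk' l k) (\<Sum>l<n. M i l * mat_star n M l k)"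
      using R k by (intro dle_sum_mono dle_mult_left star_ge) auto
    also have "dle \<dots> u" unfolding u_def by (rule dle_addR)
    finally show ?thesis using Suc by (simp add: mat_mult_def)
  qed
  then have "dle (mat_star n M i k) u" using star_le R k by blast
  then have "dle (c * mat_star n M i k) (c * u)" by (rule dle_mult_left)
  moreover have "c * u = c * mat_one i k"
    unfolding u_def using c by (simp add: distrib_left sum_distrib_left mult.assoc[symmetric])
  moreover have "dle (c * mat_one i k) (c * mat_star n M i k)"
    using star_ge[OF R k, of M 0 i] by (simp add: dle_mult_left)
  ultimately show ?thesis by (metis dle_antisym)
qed

lemma annihil_right:
  assumes R: "R_dioid TYPE('a::dioid)" and i: "i < n" and k: "k < n"
    and c: "\<And>l. l < n \<Longrightarrow> (M::'a mat) l k * c = 0"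
  shows "mat_star n M i k * c = mat_one i k * c"
proof -
  define u where "u = mat_one i k + (\<Sum>l<n. mat_star n M i l * M l k)"
  have "dle (mat_pow n M kk i k) u" for kk
  proof (cases kk)
    case 0 then show ?thesis by (simp add: u_def dle_addL)
  next
    case (Suc kk')
    have "dle (\<Sum>l<n. mat_pow n M kk' i l * M l k) (\<Sum>l<n. mat_star n M i l * M l k)"
      using R by (intro dle_sum_mono dle_mult_right star_ge) auto
    also have "dle \<dots> u" unfolding u_def by (rule dle_addR)
    finally show ?thesis using Suc mat_pow_Suc_right[OF i k, of M kk'] by simp
  qed
  then have "dle (mat_star n M i k) u" using star_le R k by blast
  then have "dle (mat_star n M i k * c) (u * c)" by (rule dle_mult_right)
  moreover have "u * c = mat_one i k * c"
    unfolding u_def using c by (simp add: distrib_right sum_distrib_right mult.assoc)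
  moreover have "dle (mat_one i k * c) (mat_star n M i k * c)"
    using star_ge[OF R k, of M 0 i] by (simp add: dle_mult_right)
  ultimately show ?thesis by (metis dle_antisym)
qed

lemma comm01: "(x::'a::dioid) \<in> {0,1} \<Longrightarrow> c * x = x * c" by (elim insertE) simp_all

lemma Zc_mult: "x \<in> Zc m p q \<Longrightarrow> y \<in> Zc m p q \<Longrightarrow> x * y \<in> Zc m p q"
  unfolding Zc_def
proof (intro CollectI ballI)
  fix c assume x: "x \<in> {x. \<forall>c\<in>Cimg m p q. x * c = c * x}" and y: "y \<in> {x. \<forall>c\<in>Cimg m p q. x * c = c * x}"
    and c: "c \<in> Cimg m p q"
  have "x * y * c = x * (y * c)" by (simp add: mult.assoc)
  also have "\<dots> = x * (c * y)" using y c by simp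
  also have "\<dots> = (x * c) * y" by (simp add: mult.assoc)
  also have "\<dots> = (c * x) * y" using x c by simp
  finally show "x * y * c = c * (x * y)" by (simp add: mult.assoc)
qed
lemma Zc_add: "x \<in> Zc m p q \<Longrightarrow> y \<in> Zc m p q \<Longrightarrow> x + y \<in> Zc m p q"
  unfolding Zc_def by (simp add: distrib_left distrib_right)
lemma Zc_01: "(x::'a::dioid) \<in> {0,1} \<Longrightarrow> x \<in> Zc m p q"
  unfolding Zc_def by auto
lemma Zc_sum: "(\<And>i. i \<in> I \<Longrightarrow> f i \<in> Zc m p q) \<Longrightarrow> sum f I \<in> Zc m p q"
proof (induction I rule: infinite_finite_induct)
  case (infinite A) then show ?case by (simp add: Zc_01)
next
  case empty then show ?case by (simp add: Zc_01)
next
  case (insert x F) then show ?case by (simp add: Zc_add)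
qed

lemma single_Cimg:
  assumes "g \<in> Delta m"
  shows "letterval p q g \<in> Cimg m p (q::nat \<Rightarrow> 'a::dioid)"
proof -
  have w: "wordval p q ` {[g]} = {letterval p q g}" by (simp add: wordval_def)
  have "is_lub (letterval p q g) {letterval p q g}" unfolding is_lub_def by (simp add: dle_refl)
  then have "rsup (wordval p q ` {[g]}) = letterval p q g"
    unfolding w by (rule lub_unique)
  moreover have "reglang {[g]}" by (rule reg_fin) simp
  moreover have "{[g]} \<subseteq> lists (Delta m)" using assms by simp
  ultimately show ?thesis unfolding Cimg_def by (intro CollectI exI[of _ "{[g]}"]) simp
qed

theorem corollary5:
  fixes \<iota> :: "'k::dioid \<Rightarrow> 't::dioid" and p q :: "nat \<Rightarrow> 't" and m n :: nat
    and S F :: "nat \<Rightarrow> 't" and U X V N :: "'t mat"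
  assumes RK: "R_dioid TYPE('k)" and RT: "R_dioid TYPE('t)"
    and tensor: "tensor_Cm m \<iota> p q"
    and m2: "m \<ge> 2"
    and S01: "\<forall>j<n. S j \<in> {0, 1}"
    and F01: "\<forall>i<n. F i \<in> {0, 1}"
    and U_p: "\<forall>i<n. \<forall>j<n. U i j \<in> insert 0 (p ` {1..<m})"
    and X_K: "\<forall>i<n. \<forall>j<n. X i j \<in> range \<iota>"
    and V_q: "\<forall>i<n. \<forall>j<n. V i j \<in> insert 0 (q ` {1..<m})"
    and N_least: "least_sol n U V X N"
    and N_Z: "\<forall>i<n. \<forall>j<n. N i j \<in> Zc m p q"
    and N_nf: "mat_eq n (mat_star n (mat_add (mat_add U X) V))
                 (mat_mult n (mat_mult n (mat_star n (mat_mult n N V)) N) (mat_star n (mat_mult n U N)))"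
  shows "p 0 * row_mat_col n S (mat_star n (mat_add (mat_add U X) V)) F * q 0 = row_mat_col n S N F
         \<and> row_mat_col n S N F \<in> Zc m p q"
proof -
  have Cm: "Cm_rel m p q" using tensor unfolding tensor_Cm_def by blast
  have m0: "0 < m" using m2 by simp
  have pC: "p 0 \<in> Cimg m p q" using single_Cimg[of "P 0" m p q] m0 by (simp add: Delta_def)
  have qC: "q 0 \<in> Cimg m p q" using single_Cimg[of "Q 0" m p q] m0 by (simp add: Delta_def)
  have pN: "p 0 * N i j = N i j * p 0" if "i < n" "j < n" for i j
    using N_Z that pC unfolding Zc_def by auto
  have qN: "q 0 * N i j = N i j * q 0" if "i < n" "j < n" for i j
    using N_Z that qC unfolding Zc_def by auto
  have pq: "p 0 * q 0 = 1" using Cm m0 unfolding Cm_rel_def by auto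
  have pV: "p 0 * V a l = 0" if "a < n" "l < n" for a l
  proof -
    have "V a l \<in> insert 0 (q ` {1..<m})" using V_q that by blast
    then have "V a l = 0 \<or> (\<exists>j. 1 \<le> j \<and> j < m \<and> V a l = q j)" by (auto simp: image_iff)
    then show ?thesis
    proof
      assume "\<exists>j. 1 \<le> j \<and> j < m \<and> V a l = q j"
      then obtain j where "1 \<le> j" "j < m" "V a l = q j" by blast
      then show ?thesis using Cm m0 unfolding Cm_rel_def by simp
    qed simp
  qed
  have Uq: "U l a * q 0 = 0" if "a < n" "l < n" for a l
  proof -
    have "U l a \<in> insert 0 (p ` {1..<m})" using U_p that by blast
    then have "U l a = 0 \<or> (\<exists>j. 1 \<le> j \<and> j < m \<and> U l a = p j)" by (auto simp: image_iff)
    then show ?thesis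
    proof
      assume "\<exists>j. 1 \<le> j \<and> j < m \<and> U l a = p j"
      then obtain j where "1 \<le> j" "j < m" "U l a = p j" by blast
      then show ?thesis using Cm m0 unfolding Cm_rel_def by simp
    qed simp
  qed
  define Ns where "Ns = mat_star n (mat_mult n N V)"
  define Us where "Us = mat_star n (mat_mult n U N)"
  define As where "As = mat_star n (mat_add (mat_add U X) V)"
  have pNs: "p 0 * Ns i a = p 0 * mat_one i a" if "i < n" "a < n" for i a
    unfolding Ns_def
  proof (rule annihil_left[OF RT that])
    fix l assume l: "l < n"
    have "p 0 * mat_mult n N V i l = (\<Sum>b<n. N i b * (p 0 * V b l))"
      unfolding mat_mult_def sum_distrib_left
      by (rule sum.cong) (auto simp: mult.assoc[symmetric] pN that)
    also have "\<dots> = 0" using pV l by simp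
    finally show "p 0 * mat_mult n N V i l = 0" .
  qed
  have Usq: "Us b j * q 0 = mat_one b j * q 0" if "b < n" "j < n" for b j
    unfolding Us_def
  proof (rule annihil_right[OF RT that])
    fix l assume l: "l < n"
    have "mat_mult n U N l j * q 0 = (\<Sum>a<n. (U l a * q 0) * N a j)"
      unfolding mat_mult_def sum_distrib_right
      by (rule sum.cong) (auto simp: mult.assoc qN that)
    also have "\<dots> = 0" using Uq l by simp
    finally show "mat_mult n U N l j * q 0 = 0" .
  qed
  have key: "p 0 * As i j * q 0 = N i j" if i: "i < n" and j: "j < n" for i j
  proof -
    have "As i j = (\<Sum>b<n. (\<Sum>a<n. Ns i a * N a b) * Us b j)"
      using N_nf i j unfolding mat_eq_def As_def Ns_def Us_def by (simp add: mat_mult_def)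
    then have "p 0 * As i j * q 0 = (\<Sum>b<n. (\<Sum>a<n. (p 0 * Ns i a) * N a b) * (Us b j * q 0))"
      by (simp add: sum_distrib_left sum_distrib_right mult.assoc)
    also have "\<dots> = (\<Sum>b<n. (\<Sum>a<n. (p 0 * mat_one i a) * N a b) * (mat_one b j * q 0))"
    proof (rule sum.cong[OF refl])
      fix b assume b: "b \<in> {..<n}"
      have "(\<Sum>a<n. (p 0 * Ns i a) * N a b) = (\<Sum>a<n. (p 0 * mat_one i a) * N a b)"
        using pNs i by (intro sum.cong) auto
      then show "(\<Sum>a<n. (p 0 * Ns i a) * N a b) * (Us b j * q 0) =
          (\<Sum>a<n. (p 0 * mat_one i a) * N a b) * (mat_one b j * q 0)"
        using Usq b j by simp
    qed
    also have "\<dots> = p 0 * (\<Sum>b<n. (\<Sum>a<n. mat_one i a * N a b) * mat_one b j) * q 0"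
      by (simp add: sum_distrib_left sum_distrib_right mult.assoc)
    also have "\<dots> = p 0 * N i j * q 0"
      using i j by (simp add: sum_one_l sum_one_r)
    also have "\<dots> = N i j" using pN[OF i j] pq by (simp add: mult.assoc)
    finally show ?thesis .
  qed
  have "p 0 * row_mat_col n S As F * q 0 = (\<Sum>i<n. \<Sum>j<n. p 0 * (S i * As i j * F j) * q 0)"
    unfolding row_mat_col_def by (simp add: sum_distrib_left sum_distrib_right)
  also have "\<dots> = (\<Sum>i<n. \<Sum>j<n. S i * (p 0 * As i j * q 0) * F j)"
  proof (intro sum.cong refl)
    fix i j assume i: "i \<in> {..<n}" and j: "j \<in> {..<n}"
    have e1: "p 0 * S i = S i * p 0" using S01 i by (intro comm01) auto
    have e2: "q 0 * F j = F j * q 0" using F01 j by (intro comm01) auto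
    have "p 0 * (S i * As i j * F j) * q 0 = (p 0 * S i) * As i j * (F j * q 0)"
      by (simp add: mult.assoc)
    also have "\<dots> = (S i * p 0) * As i j * (q 0 * F j)" using e1 e2 by simp
    also have "\<dots> = S i * (p 0 * As i j * q 0) * F j" by (simp add: mult.assoc)
    finally show "p 0 * (S i * As i j * F j) * q 0 = S i * (p 0 * As i j * q 0) * F j" .
  qed
  also have "\<dots> = row_mat_col n S N F"
    unfolding row_mat_col_def using key by simp
  finally have G1: "p 0 * row_mat_col n S As F * q 0 = row_mat_col n S N F" .
  have "row_mat_col n S N F \<in> Zc m p q"
    unfolding row_mat_col_def
  proof (rule Zc_sum, rule Zc_sum)
    fix i j assume i: "i \<in> {..<n}" and j: "j \<in> {..<n}"
    have "S i \<in> Zc m p q" using S01 i by (intro Zc_01) auto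
    moreover have "F j \<in> Zc m p q" using F01 j by (intro Zc_01) auto
    moreover have "N i j \<in> Zc m p q" using N_Z i j by auto
    ultimately show "S i * N i j * F j \<in> Zc m p q" by (intro Zc_mult)
  qed
  then show ?thesis using G1 unfolding As_def by blast
qed

end
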